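(* Fix $m\ge1$, a partition $\xi$ with all parts $\le m$, $\mu\in\mathbb Z_{\ge0}$, $\mu=\mu_1m+\mu_0$ ($0\le\mu_0<m$), $t=\#\{i:\xi_i=m\}$, and assume $k:=\mu_1+1-t\ge0$. Let $\alpha_0=m-\mu_0-1$ and $\alpha_1,\dots,\alpha_L$ the parts of $\xi$ smaller than $m$ (with multiplicity), so $F_{\xi,m,\mu}(x)=\frac{p_{m-\mu_0-1}(x)p_\xi(x)}{p_m(x)^{\mu_1+1}}=\prod_{i=0}^Lp_{\alpha_i}(x)/p_m(x)^k=\sum_{r\ge0}a_rx^r$. Suppose there exist integers $(a_\nu,b_\nu)$, $1\le\nu\le k$, with $0\le a_\nu,b_\nu\le m-1$ and $a_\nu+b_\nu\le m-1$, such that $\prod_{i=0}^Lp_{\alpha_i}(x)=\prod_{\nu=1}^kp_{a_\nu}(x)p_{b_\nu}(x)$. Then \[ F_{\xi,m,\mu}(x)=\prod_{\nu=1}^k\Big(\sum_{u\ge0}D_m(a_\nu,b_\nu;u)x^u\Big), \] so $a_r$ equals the number of $k$-tuples $(P_1,\dots,P_k)$ with $P_\nu\in\mathcal D_m(a_\nu,b_\nu;u_\nu)$ for some $u_\nu\ge0$ and $u_1+\cdots+u_k=r$; in particular all $a_r\ge0$. Moreover, in each of the following families take $\mu=|\xi|$ (and $s,t\ge 0$ integers; a notation $m^t$ denotes $t$ parts equal to $m$, parts arranged in nonincreasing order): (a) $\xi=(m^t,1^s)$, $s=qm+\rho$ with $q\ge0$, $0\le\rho<m$. For every $N\ge0$,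 $a_N$ equals the number of tuples $(P_0,\dots,P_q)$ with $P_0\in\mathcal D_m(0,m-\rho-1;u_0)$, $P_\nu\in\mathcal D_m(0,0;u_\nu)$ for $1\le\nu\le q$, and $u_0+\cdots+u_q=N$. (b) $\xi=(m^t,r,1^s)$ with $1\le r\le m-1$, $r+s=qm+\rho$, $q\ge0$, $0\le\rho<m$. If $q=0$, then for every $u\ge0$, $a_u=D_m(r,m-r-s-1;u)$, i.e. the number of Dyck paths of height at most $m-1$ and semilength $r+s+u$ whose first $r$ steps are up-steps and whose last $r+s$ steps are down-steps. If $q\ge1$, then for every $N\ge0$, $a_N$ equals the number of tuples $(P_0,\dots,P_q)$ with $P_0\in\mathcal D_m(0,m-\rho-1;u_0)$, $P_1\in\mathcal D_m(r,0;u_1)$, $P_\nu\in\mathcal D_m(0,0;u_\nu)$ for $2\le\nu\le q$, and $u_0+\cdots+u_q=N$. (c) $\xi=(m^t,r_1,\dots,r_d,1^s)$ with $1\le r_i\le m-1$, $r_1+\cdots+r_d+s=qm+\rho$, $q\ge0$, $0\le\rho<m$. If $q\ge d$, then for every $N\ge0$, $a_N$ equals the number of tuples $(P_0,\dots,P_q)$ with $P_0\in\mathcal D_m(0,m-\rho-1;u_0)$, $P_i\in\mathcal D_m(r_i,0;u_i)$ for $1\le i\le d$, $P_\nu\in\mathcal D_m(0,0;u_\nu)$ for $d+1\le\nu\le q$, and $u_0+\cdots+u_q=N$.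
   Context: $p_0=p_1=1$, $p_{r+1}(x)=p_r(x)-xp_{r-1}(x)$ ($r\ge1$); $p_\xi=\prod_ip_{\xi_i}$; $|\xi|$ is the sum of the parts. A Dyck path is a lattice path from $(0,0)$ with steps $U=(1,1)$, $D=(1,-1)$, ending on the $x$-axis and never going below it; its semilength is half its number of steps and its height is the maximal $y$-coordinate reached. For $m\ge1$, $0\le a,b\le m-1$ with $a+b\le m-1$, and $u\ge0$, $\mathcal D_m(a,b;u)$ is the set of Dyck paths of height at most $m-1$ and semilength $m-1-b+u$ whose first $a$ steps are up-steps and whose last $m-1-b$ steps are down-steps; $D_m(a,b;u):=\#\mathcal D_m(a,b;u)$. *)

theory Defs
  imports "HOL-Computational_Algebra.Polynomial" "HOL-Computational_Algebra.Formal_Power_Series"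
    "HOL-Computational_Algebra.Polynomial_FPS"
begin

fun pp :: "nat \<Rightarrow> int poly" where
  "pp 0 = 1"
| "pp (Suc 0) = 1"
| "pp (Suc (Suc r)) = pp (Suc r) - [:0, 1:] * pp r"

definition pxi :: "nat list \<Rightarrow> int poly" where
  "pxi xi = prod_list (map pp xi)"

definition is_partition_le :: "nat \<Rightarrow> nat list \<Rightarrow> bool" where
  "is_partition_le m xi \<longleftrightarrow> sorted_wrt (\<ge>) xi \<and> (\<forall>x\<in>set xi. 1 \<le> x \<and> x \<le> m)"

definition Fser :: "nat \<Rightarrow> nat list \<Rightarrow> nat \<Rightarrow> rat fps" where
  "Fser m xi mu =
     fps_of_poly (map_poly of_int (pp (m - mu mod m - 1) * pxi xi))
     * inverse (fps_of_poly (map_poly of_int (pp m)) ^ (mu div m + 1))"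

text \<open>Lattice paths as lists of steps: True = up-step U, False = down-step D.
  The height after a list of steps.\<close>
definition hgt :: "bool list \<Rightarrow> int" where
  "hgt w = sum_list (map (\<lambda>s. if s then 1 else -1) w)"

definition is_dyck :: "bool list \<Rightarrow> bool" where
  "is_dyck w \<longleftrightarrow> (\<forall>k\<le>length w. hgt (take k w) \<ge> 0) \<and> hgt w = 0"

definition height_le :: "int \<Rightarrow> bool list \<Rightarrow> bool" where
  "height_le h w \<longleftrightarrow> (\<forall>k\<le>length w. hgt (take k w) \<le> h)"

definition dyck_set :: "nat \<Rightarrow> nat \<Rightarrow> nat \<Rightarrow> nat \<Rightarrow> bool list set" where
  "dyck_set m a b u = {w. is_dyck w \<and> height_le (int m - 1) w
      \<and> length w = 2 * (m - 1 - b + u)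
      \<and> take a w = replicate a True
      \<and> drop (length w - (m - 1 - b)) w = replicate (m - 1 - b) False}"

definition Dcount :: "nat \<Rightarrow> nat \<Rightarrow> nat \<Rightarrow> nat \<Rightarrow> nat" where
  "Dcount m a b u = card (dyck_set m a b u)"

end

theory Submission
  imports Defs
begin

unbundle fps_syntax


definition phi :: "int poly \<Rightarrow> rat fps" where
  "phi p = fps_of_poly (map_poly of_int p)"

lemma phi_nth: "phi p $ n = of_int (coeff p n)"
  by (simp add: phi_def coeff_map_poly)

lemma phi_mult: "phi (p * q) = phi p * phi q"
  by (rule fps_ext) (simp add: phi_nth coeff_mult fps_mult_nth atLeast0AtMost)

lemma phi_diff: "phi (p - q) = phi p - phi q"
  by (rule fps_ext) (simp add: phi_nth)

lemma phi_1: "phi 1 = 1"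
  by (rule fps_ext) (simp add: phi_nth coeff_1)

lemma phi_X: "phi [:0,1:] = fps_X"
  by (rule fps_ext) (simp add: phi_nth coeff_pCons fps_X_def split: nat.split)

lemma phi_prod_list: "phi (prod_list xs) = prod_list (map phi xs)"
  by (induction xs) (simp_all add: phi_1 phi_mult)

lemma phi_power: "phi (p ^ n) = phi p ^ n"
  by (induction n) (simp_all add: phi_1 phi_mult)

definition Q :: "nat \<Rightarrow> rat fps" where "Q k = phi (pp k)"

lemma Q0: "Q 0 = 1" and Q1: "Q (Suc 0) = 1"
  by (simp_all add: Q_def phi_1)

lemma QSS: "Q (Suc (Suc k)) = Q (Suc k) - fps_X * Q k"
  unfolding Q_def pp.simps(3) phi_diff phi_mult phi_X ..

lemma Q_nth0: "Q k $ 0 = 1"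
proof (induction k rule: pp.induct)
  case 1 then show ?case by (simp add: Q0)
next
  case 2 then show ?case by (simp add: Q1)
next
  case (3 r) then show ?case by (simp add: QSS)
qed

lemma Q_add: "Q (Suc a + Suc b) = Q (Suc a) * Q (Suc b) - fps_X * Q a * Q b"
proof (induction b rule: nat_less_induct)
  case (1 b)
  show ?case
  proof (cases b)
    case 0 then show ?thesis by (simp add: QSS Q0 Q1 algebra_simps)
  next
    case (Suc c)
    show ?thesis
    proof (cases c)
      case 0
      then show ?thesis using Suc by (simp add: QSS Q0 Q1 algebra_simps numeral_2_eq_2)
    next
      case (Suc d)
      have h1: "Q (Suc a + Suc c) = Q (Suc a) * Q (Suc c) - fps_X * Q a * Q c"
        using 1 \<open>b = Suc c\<close> by simp
      have h2: "Q (Suc a + Suc d) = Q (Suc a) * Q (Suc d) - fps_X * Q a * Q d"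
        using 1 \<open>b = Suc c\<close> Suc by simp
      have e1: "Q (Suc b) = Q (Suc c) - fps_X * Q c"
        using \<open>b = Suc c\<close> Suc QSS[of c] by simp
      have e2: "Q b = Q c - fps_X * Q d"
        using \<open>b = Suc c\<close> Suc QSS[of d] by simp
      have "Q (Suc a + Suc b) = Q (Suc a + Suc c) - fps_X * Q (Suc a + Suc d)"
        using \<open>b = Suc c\<close> Suc QSS[of "Suc a + Suc d"] by simp
      also have "\<dots> = Q (Suc a) * (Q (Suc c) - fps_X * Q c) - fps_X * Q a * (Q c - fps_X * Q d)"
        unfolding h1 h2 using \<open>b = Suc c\<close> Suc by (simp add: algebra_simps)
      also have "\<dots> = Q (Suc a) * Q (Suc b) - fps_X * Q a * Q b"
        unfolding e1 e2 ..
      finally show ?thesis .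
    qed
  qed
qed


fun walks :: "nat \<Rightarrow> nat \<Rightarrow> nat \<Rightarrow> nat \<Rightarrow> nat" where
  "walks m i j 0 = (if i = j then 1 else 0)"
| "walks m i j (Suc n) = (if Suc i < m then walks m (Suc i) j n else 0)
     + (if 0 < i then walks m (i - 1) j n else 0)"

lemma walks_short: "n < j - i \<Longrightarrow> walks m i j n = 0"
  by (induction n arbitrary: i) auto

definition C :: "nat \<Rightarrow> nat \<Rightarrow> nat \<Rightarrow> nat \<Rightarrow> nat" where
  "C m i j u = (if i \<le> j + 2 * u then walks m i j (j + 2 * u - i) else 0)"

lemma C_rec: "C m i j u = (if i = j \<and> u = 0 then 1 else 0)
   + (if Suc i < m then C m (Suc i) j u else 0)
   + (if 0 < i \<and> 0 < u then C m (i - 1) j (u - 1) else 0)"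
proof (cases "i \<le> j + 2 * u")
  case False
  then show ?thesis by (auto simp: C_def)
next
  case True
  show ?thesis
  proof (cases "i = j + 2 * u")
    case True
    then show ?thesis by (auto simp: C_def)
  next
    case False
    then obtain n where n: "j + 2 * u - i = Suc n" using \<open>i \<le> j + 2 * u\<close>
      by (metis Suc_diff_le le_neq_implies_less Suc_leI diff_Suc_Suc diff_zero less_imp_le_nat)
    have "C m i j u = walks m i j (Suc n)" using True n by (simp add: C_def)
    also have "\<dots> = (if Suc i < m then walks m (Suc i) j n else 0)
     + (if 0 < i then walks m (i - 1) j n else 0)" by simp
    also have "(if Suc i < m then walks m (Suc i) j n else 0) = (if Suc i < m then C m (Suc i) j u else 0)"
    proof -
      have "Suc i \<le> j + 2 * u" "j + 2 * u - Suc i = n" using n by arith+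
      then show ?thesis by (simp add: C_def)
    qed
    also have "(if 0 < i then walks m (i - 1) j n else 0) = (if 0 < i \<and> 0 < u then C m (i - 1) j (u - 1) else 0)"
    proof (cases "0 < i \<and> 0 < u")
      case True
      have "i - 1 \<le> j + 2 * (u - 1)" "j + 2 * (u - 1) - (i - 1) = n" using n True by arith+
      then show ?thesis using True by (simp add: C_def)
    next
      case f: False
      show ?thesis
      proof (cases "0 < i")
        case True
        with f have "u = 0" by simp
        then have "n < j - (i - 1)" using n True by simp
        then show ?thesis using walks_short \<open>u = 0\<close> by simp
      qed simp
    qed
    finally show ?thesis using False n by auto
  qed
qed

definition H :: "nat \<Rightarrow> nat \<Rightarrow> nat \<Rightarrow> rat fps" where
  "H m j i = Abs_fps (\<lambda>u. of_nat (C m i j u))"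

lemma H_rec: "H m j i = (if i = j then 1 else 0) + (if Suc i < m then H m j (Suc i) else 0)
   + (if 0 < i then fps_X * H m j (i - 1) else 0)"
proof (rule fps_ext)
  fix u
  show "H m j i $ u = ((if i = j then 1 else 0) + (if Suc i < m then H m j (Suc i) else 0)
   + (if 0 < i then fps_X * H m j (i - 1) else 0)) $ u"
    unfolding H_def by (subst C_rec) (auto simp: fps_one_nth)
qed


definition T :: "nat \<Rightarrow> nat \<Rightarrow> nat \<Rightarrow> rat fps" where
  "T m j i = Q (min i j) * Q (m - 1 - max i j) * fps_X ^ (i - j)"

lemma T_rec:
  assumes "i < m" "j < m"
  shows "T m j i = (if i = j then Q m else 0) + (if Suc i < m then T m j (Suc i) else 0)
   + (if 0 < i then fps_X * T m j (i - 1) else 0)"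
proof (cases i j rule: linorder_cases)
  case less
  show ?thesis
  proof (cases i)
    case 0
    then show ?thesis using less assms by (simp add: T_def Q0 Q1)
  next
    case (Suc k)
    have "T m j i = Q (Suc k) * Q (m - 1 - j)" using Suc less by (simp add: T_def)
    also have e:  "\<dots> = Q (Suc (Suc k)) * Q (m - 1 - j) + fps_X * (Q k * Q (m - 1 - j))"
      unfolding QSS[of k] by (simp add: algebra_simps)
    finally have e0: "T m j i = Q (Suc (Suc k)) * Q (m - 1 - j) + fps_X * (Q k * Q (m - 1 - j))" .
    have e1: "T m j (Suc i) = Q (Suc (Suc k)) * Q (m - 1 - j)"
      unfolding T_def using Suc less by simp
    have e2: "T m j (i - 1) = Q k * Q (m - 1 - j)"
      unfolding T_def using Suc less by simp
    have "Suc i < m" "i \<noteq> j" "0 < i" using Suc less assms by auto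
    then show ?thesis unfolding e0 e1 e2 by simp
  qed
next
  case equal
  show ?thesis
  proof (cases j)
    case 0
    show ?thesis
    proof (cases m)
      case 0 then show ?thesis using assms by simp
    next
      case (Suc m')
      show ?thesis
      proof (cases m')
        case 0 then show ?thesis using equal \<open>j = 0\<close> Suc by (simp add: T_def Q0 Q1)
      next
        case (Suc k)
        then show ?thesis using equal \<open>j = 0\<close> \<open>m = Suc m'\<close> QSS[of k]
          by (simp add: T_def Q0 algebra_simps)
      qed
    qed
  next
    case (Suc a)
    show ?thesis
    proof (cases "Suc j < m")
      case False
      then have "m = Suc (Suc a)" using assms Suc by simp
      then show ?thesis using equal Suc QSS[of a] by (simp add: T_def Q0 algebra_simps)
    next
      case True
      define b where "b = m - 2 - j"
      have b: "m - 1 - j = Suc b" using True unfolding b_def by simp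
      then have m: "m = Suc a + Suc (Suc b)" using Suc True by simp
      have mj: "m - 1 - Suc j = b" using b by simp
      have "T m j i = Q (Suc a) * Q (Suc b)" using equal Suc b by (simp add: T_def)
      also have "\<dots> = Q m + fps_X * (Q (Suc a) * Q b) + fps_X * (Q a * Q (Suc b))"
        unfolding m Q_add QSS[of b] by (simp add: algebra_simps)
      finally show ?thesis using equal Suc True b mj by (simp add: T_def algebra_simps)
    qed
  qed
next
  case greater
  have e: "fps_X * fps_X ^ (i - 1 - j) = (fps_X ^ (i - j) :: rat fps)"
  proof -
    have d: "i - j = Suc (i - 1 - j)" using greater by arith
    show ?thesis by (simp only: d power_Suc)
  qed
  show ?thesis
  proof (cases "Suc i < m")
    case True
    define k where "k = m - 2 - i"
    have k: "m - 1 - i = Suc k" using True unfolding k_def by simp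
    then have k2: "m - Suc i - 1 = k" "m - i = Suc (Suc k)" "m - Suc (Suc i) = k" using True by (simp_all add: k_def)
    have "T m j i = Q j * Q (Suc k) * fps_X ^ (i - j)" using greater k by (simp add: T_def)
    also have "\<dots> = Q j * Q k * (fps_X * fps_X ^ (i - j)) + fps_X * (Q j * Q (Suc (Suc k)) * fps_X ^ (i - 1 - j))"
    proof -
      have aux: "Q j * Q (Suc k) * (fps_X * P) = Q j * Q k * (fps_X * (fps_X * P)) + fps_X * (Q j * Q (Suc (Suc k)) * P)" for P
        by (simp add: QSS algebra_simps)
      show ?thesis using aux[of "fps_X ^ (i - 1 - j)"] unfolding e .
    qed
    finally show ?thesis using greater True k k2 by (simp add: T_def Suc_diff_le)
  next
    case False
    then have mi: "m = Suc i" using assms by simp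
    have "T m j i = Q j * fps_X ^ (i - j)" using greater mi by (simp add: T_def Q0)
    also have "\<dots> = fps_X * (Q j * Q (Suc 0) * fps_X ^ (i - 1 - j))"
      by (simp add: Q1 e[symmetric] algebra_simps)
    finally show ?thesis using greater mi by (simp add: T_def)
  qed
qed


lemma uniq:
  fixes E :: "nat \<Rightarrow> rat fps"
  assumes rec: "\<And>i. i < m \<Longrightarrow> E i = (if Suc i < m then E (Suc i) else 0) + (if 0 < i then fps_X * E (i - 1) else 0)"
  shows "\<forall>i<m. E i $ n = 0"
proof (induction n rule: less_induct)
  case (less n)
  have "\<forall>d. d < m \<longrightarrow> E (m - 1 - d) $ n = 0"
  proof
    fix d show "d < m \<longrightarrow> E (m - 1 - d) $ n = 0"
    proof (induction d)
      case 0
      show ?case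
      proof
        assume "0 < m"
        then have "E (m - 1) = (if 0 < m - 1 then fps_X * E (m - 1 - 1) else 0)" using rec[of "m - 1"] by simp
        then show "E (m - 1 - 0) $ n = 0" using less by auto
      qed
    next
      case (Suc d)
      show ?case
      proof
        assume "Suc d < m"
        then have "E (m - 1 - Suc d) = E (Suc (m - 1 - Suc d)) + (if 0 < m - 1 - Suc d then fps_X * E (m - 1 - Suc d - 1) else 0)"
          using rec[of "m - 1 - Suc d"] by simp
        moreover have "Suc (m - 1 - Suc d) = m - 1 - d" using \<open>Suc d < m\<close> by simp
        ultimately show "E (m - 1 - Suc d) $ n = 0" using Suc less \<open>Suc d < m\<close> by auto
      qed
    qed
  qed
  show ?case
  proof (intro allI impI)
    fix i assume "i < m"
    then have "m - 1 - (m - 1 - i) = i" "m - 1 - i < m" by auto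
    then show "E i $ n = 0" using \<open>\<forall>d. d < m \<longrightarrow> E (m - 1 - d) $ n = 0\<close> by metis
  qed
qed

lemma H_eq_T:
  assumes "i < m" "j < m"
  shows "H m j i = T m j i * inverse (Q m)"
proof -
  define E where "E i = H m j i - T m j i * inverse (Q m)" for i
  have iq: "Q m * inverse (Q m) = 1" by (rule inverse_mult_eq_1') (simp add: Q_nth0)
  have "E i = (if Suc i < m then E (Suc i) else 0) + (if 0 < i then fps_X * E (i - 1) else 0)" if "i < m" for i
  proof -
    have "T m j i * inverse (Q m) = (if i = j then 1 else 0) + (if Suc i < m then T m j (Suc i) * inverse (Q m) else 0)
       + (if 0 < i then fps_X * (T m j (i - 1) * inverse (Q m)) else 0)"
      by (subst T_rec[OF that assms(2)]) (simp add: algebra_simps iq)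
    then show ?thesis unfolding E_def by (subst H_rec) (simp add: algebra_simps)
  qed
  then have "\<forall>i<m. E i $ n = 0" for n by (rule uniq)
  then have "E i = 0" using assms by (auto intro: fps_ext)
  then show ?thesis unfolding E_def by simp
qed



fun ok :: "nat \<Rightarrow> int \<Rightarrow> bool list \<Rightarrow> bool" where
  "ok m i [] = True"
| "ok m i (s # w) = (0 \<le> i + (if s then 1 else -1) \<and> i + (if s then 1 else -1) < int m
      \<and> ok m (i + (if s then 1 else -1)) w)"

lemma hgt_Nil [simp]: "hgt [] = 0" by (simp add: hgt_def)
lemma hgt_Cons [simp]: "hgt (s # w) = (if s then 1 else -1) + hgt w" by (simp add: hgt_def)
lemma hgt_append [simp]: "hgt (xs @ ys) = hgt xs + hgt ys" by (simp add: hgt_def)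
lemma hgt_rep_True [simp]: "hgt (replicate a True) = int a" by (induction a) auto
lemma hgt_rep_False [simp]: "hgt (replicate a False) = - int a" by (induction a) auto

lemma ok_append: "ok m i (xs @ ys) \<longleftrightarrow> ok m i xs \<and> ok m (i + hgt xs) ys"
  by (induction xs arbitrary: i) (auto simp: add.assoc)

lemma ok_rep_True: "0 \<le> i \<Longrightarrow> i + int a < int m \<Longrightarrow> ok m i (replicate a True)"
  by (induction a arbitrary: i) auto

lemma ok_rep_False: "int h \<le> i \<Longrightarrow> i < int m \<Longrightarrow> ok m i (replicate h False)"
  by (induction h arbitrary: i) auto

lemma all_le_Suc: "(\<forall>k\<le>Suc n. P k) \<longleftrightarrow> P 0 \<and> (\<forall>k\<le>n. P (Suc k))"
  by (metis Suc_le_mono le0 not0_implies_Suc)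

lemma ok_iff:
  "0 \<le> i \<Longrightarrow> i < int m \<Longrightarrow>
   ok m i w \<longleftrightarrow> (\<forall>k\<le>length w. 0 \<le> i + hgt (take k w) \<and> i + hgt (take k w) < int m)"
proof (induction w arbitrary: i)
  case Nil
  then show ?case by simp
next
  case (Cons s w)
  define i' where "i' = i + (if s then 1 else -1)"
  have "(\<forall>k\<le>length (s # w). 0 \<le> i + hgt (take k (s # w)) \<and> i + hgt (take k (s # w)) < int m)
     \<longleftrightarrow> (\<forall>k\<le>length w. 0 \<le> i' + hgt (take k w) \<and> i' + hgt (take k w) < int m)"
    unfolding length_Cons all_le_Suc using Cons.prems by (simp add: i'_def add.assoc)
  moreover have "ok m i (s # w) \<longleftrightarrow> 0 \<le> i' \<and> i' < int m \<and> ok m i' w"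
    by (simp add: i'_def)
  moreover have "(\<forall>k\<le>length w. 0 \<le> i' + hgt (take k w) \<and> i' + hgt (take k w) < int m)
     \<Longrightarrow> 0 \<le> i' \<and> i' < int m"
    by (metis add.right_neutral hgt_Nil le0 take0)
  ultimately show ?case using Cons.IH by blast
qed

definition WS :: "nat \<Rightarrow> nat \<Rightarrow> nat \<Rightarrow> nat \<Rightarrow> bool list set" where
  "WS m i j n = {w. length w = n \<and> ok m (int i) w \<and> int i + hgt w = int j}"

lemma WS_0: "WS m i j 0 = (if i = j then {[]} else {})"
  by (auto simp: WS_def)

lemma WS_Suc: assumes "i < m" shows "WS m i j (Suc n) =
   (if Suc i < m then (Cons True) ` WS m (Suc i) j n else {})
   \<union> (if 0 < i then (Cons False) ` WS m (i - 1) j n else {})"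
proof (intro equalityI subsetI)
  fix w assume "w \<in> WS m i j (Suc n)"
  then obtain s v where w: "w = s # v" "length v = n" "ok m (int i) (s # v)" "int i + hgt (s # v) = int j"
    unfolding WS_def by (auto simp: length_Suc_conv)
  show "w \<in> (if Suc i < m then (Cons True) ` WS m (Suc i) j n else {})
   \<union> (if 0 < i then (Cons False) ` WS m (i - 1) j n else {})"
  proof (cases s)
    case True
    then have "Suc i < m" "ok m (int (Suc i)) v" "int (Suc i) + hgt v = int j" using w by (auto simp: algebra_simps)
    then show ?thesis using w True by (auto simp: WS_def)
  next
    case False
    then have "0 < i" using w by auto
    then have "ok m (int (i - 1)) v" "int (i - 1) + hgt v = int j" using w False by (auto simp: of_nat_diff)
    then show ?thesis using w False \<open>0 < i\<close> by (auto simp: WS_def)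
  qed
next
  fix w assume "w \<in> (if Suc i < m then (Cons True) ` WS m (Suc i) j n else {})
   \<union> (if 0 < i then (Cons False) ` WS m (i - 1) j n else {})"
  then show "w \<in> WS m i j (Suc n)"
    using assms by (auto simp: WS_def of_nat_diff algebra_simps split: if_splits)
qed

lemma card_WS: "i < m \<Longrightarrow> finite (WS m i j n) \<and> card (WS m i j n) = walks m i j n"
proof (induction n arbitrary: i)
  case 0
  then show ?case by (simp add: WS_0)
next
  case (Suc n)
  have d: "(if Suc i < m then (Cons True) ` WS m (Suc i) j n else {})
   \<inter> (if 0 < i then (Cons False) ` WS m (i - 1) j n else {}) = {}" by auto
  have f1: "finite (if Suc i < m then (Cons True) ` WS m (Suc i) j n else {})" using Suc by simp
  have f2: "finite (if 0 < i then (Cons False) ` WS m (i - 1) j n else {})" using Suc by simp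
  have c1: "card (if Suc i < m then (Cons True) ` WS m (Suc i) j n else {}) = (if Suc i < m then walks m (Suc i) j n else 0)"
    using Suc by (simp add: card_image)
  have c2: "card (if 0 < i then (Cons False) ` WS m (i - 1) j n else {}) = (if 0 < i then walks m (i - 1) j n else 0)"
    using Suc by (simp add: card_image)
  show ?case unfolding WS_Suc[OF Suc.prems] using card_Un_disjoint[OF f1 f2 d] c1 c2 f1 f2 by simp
qed

lemma dyck_set_eq:
  assumes "a + b \<le> m - 1" "m \<ge> 1"
  shows "dyck_set m a b u = (\<lambda>v. replicate a True @ v @ replicate (m - 1 - b) False) ` WS m a (m - 1 - b) (m - 1 - b - a + 2 * u)"
    (is "_ = ?f ` WS m a ?h ?n")
proof (intro equalityI subsetI)
  fix w assume "w \<in> dyck_set m a b u"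
  then have w: "is_dyck w" "height_le (int m - 1) w" "length w = 2 * (?h + u)"
    "take a w = replicate a True" "drop (length w - ?h) w = replicate ?h False"
    unfolding dyck_set_def by auto
  define v where "v = drop a (take (length w - ?h) w)"
  have ah: "a \<le> ?h" using assms by simp
  have "w = take a w @ v @ drop (length w - ?h) w"
  proof -
    have "take a (take (length w - ?h) w) = take a w" using w(3) ah by (simp add: min_def)
    then have "take (length w - ?h) w = take a w @ v" unfolding v_def by (metis append_take_drop_id)
    then show ?thesis by (metis append.assoc append_take_drop_id)
  qed
  then have wv: "w = ?f v" using w(4,5) by simp
  have okw: "ok m 0 w" "hgt w = 0"
    using w(1,2) assms ok_iff[of 0 m w] unfolding is_dyck_def height_le_def by auto
  have "ok m (int a) v" "int a + hgt v = int ?h"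
    using okw unfolding wv ok_append by (auto simp: add.assoc)
  moreover have "length v = ?n" using w(3) ah unfolding v_def by simp
  ultimately have "v \<in> WS m a ?h ?n" by (simp add: WS_def)
  then show "w \<in> ?f ` WS m a ?h ?n" using wv by blast
next
  fix w assume "w \<in> ?f ` WS m a ?h ?n"
  then obtain v where v: "w = ?f v" "length v = ?n" "ok m (int a) v" "int a + hgt v = int ?h"
    unfolding WS_def by auto
  have ah: "a \<le> ?h" "?h < m" using assms by auto
  have okw: "ok m 0 w"
    unfolding v(1) ok_append using v ah
    by (auto intro!: ok_rep_True ok_rep_False simp: add.assoc)
  have hw: "hgt w = 0" using v by simp
  have lw: "length w = 2 * (?h + u)" using v ah by simp
  have "is_dyck w" "height_le (int m - 1) w"
    using okw hw ok_iff[of 0 m w] assms unfolding is_dyck_def height_le_def by auto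
  moreover have "take a w = replicate a True" using v by simp
  moreover have "drop (length w - ?h) w = replicate ?h False"
  proof -
    have "length w - ?h = length (replicate a True @ v)" using v ah by simp
    then show ?thesis using v by simp
  qed
  ultimately show "w \<in> dyck_set m a b u" using lw unfolding dyck_set_def by simp
qed

lemma Dcount_eq:
  assumes "a + b \<le> m - 1" "m \<ge> 1"
  shows "Dcount m a b u = C m a (m - 1 - b) u" and "finite (dyck_set m a b u)"
proof -
  have inj: "inj_on (\<lambda>v. replicate a True @ v @ replicate (m - 1 - b) False) X" for X
    by (rule inj_onI) simp
  show "Dcount m a b u = C m a (m - 1 - b) u"
    unfolding Dcount_def dyck_set_eq[OF assms] card_image[OF inj] using card_WS[of a m] assms
    by (simp add: C_def)
  show "finite (dyck_set m a b u)"
    unfolding dyck_set_eq[OF assms] using card_WS[of a m] assms by simp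
qed

definition ser :: "nat \<Rightarrow> nat \<Rightarrow> nat \<Rightarrow> rat fps" where
  "ser m a b = Abs_fps (\<lambda>u. of_nat (Dcount m a b u))"

lemma ser_eq:
  assumes "a + b \<le> m - 1" "m \<ge> 1"
  shows "ser m a b = Q a * Q b * inverse (Q m)"
proof -
  have "ser m a b = H m (m - 1 - b) a"
    unfolding ser_def H_def using Dcount_eq[OF assms] by simp
  also have "\<dots> = T m (m - 1 - b) a * inverse (Q m)"
    using assms by (intro H_eq_T) auto
  also have "T m (m - 1 - b) a = Q a * Q b"
  proof -
    have "a \<le> m - 1 - b" "m - 1 - (m - 1 - b) = b" using assms by arith+
    then show ?thesis by (simp add: T_def min_def max_def)
  qed
  finally show ?thesis .
qed



definition S :: "(nat \<Rightarrow> 'a set) list \<Rightarrow> nat \<Rightarrow> 'a list set" where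
  "S As r = {Ps. length Ps = length As \<and> (\<exists>us. length us = length As
     \<and> (\<forall>\<nu><length As. Ps ! \<nu> \<in> (As ! \<nu>) (us ! \<nu>)) \<and> sum_list us = r)}"

lemma S_Nil: "S [] r = (if r = 0 then {[]} else {})"
  by (auto simp: S_def)

lemma S_Cons: "S (A # As) r = (\<Union>i\<in>{..r}. (\<lambda>(P, Ps). P # Ps) ` (A i \<times> S As (r - i)))"
proof (intro equalityI subsetI)
  fix x assume "x \<in> S (A # As) r"
  then obtain us where x: "length x = Suc (length As)" "length us = Suc (length As)"
    "\<forall>\<nu><Suc (length As). x ! \<nu> \<in> ((A # As) ! \<nu>) (us ! \<nu>)" "sum_list us = r"
    unfolding S_def by auto
  obtain P Ps where P: "x = P # Ps" using x(1) by (cases x) auto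
  obtain u0 us' where u: "us = u0 # us'" using x(2) by (cases us) auto
  have "P \<in> A u0" using x(3) P u by force
  moreover have "Ps \<in> S As (r - u0)"
    unfolding S_def using x P u by (auto simp: All_less_Suc2 intro!: exI[of _ us'])
  moreover have "u0 \<le> r" using x(4) u by simp
  ultimately show "x \<in> (\<Union>i\<in>{..r}. (\<lambda>(P, Ps). P # Ps) ` (A i \<times> S As (r - i)))"
    using P by blast
next
  fix x assume "x \<in> (\<Union>i\<in>{..r}. (\<lambda>(P, Ps). P # Ps) ` (A i \<times> S As (r - i)))"
  then obtain i P Ps where x: "i \<le> r" "x = P # Ps" "P \<in> A i" "Ps \<in> S As (r - i)" by auto
  then obtain us where us: "length Ps = length As" "length us = length As"
     "\<forall>\<nu><length As. Ps ! \<nu> \<in> (As ! \<nu>) (us ! \<nu>)" "sum_list us = r - i"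
    unfolding S_def by auto
  show "x \<in> S (A # As) r"
    unfolding S_def using x us by (auto simp: All_less_Suc2 intro!: exI[of _ "i # us"])
qed

lemma S_card:
  assumes "\<forall>A\<in>set As. \<forall>u. finite (A u)"
    and "\<forall>A\<in>set As. \<forall>u u'. u \<noteq> u' \<longrightarrow> A u \<inter> A u' = {}"
  shows "finite (S As r) \<and> (of_nat (card (S As r)) :: rat)
      = prod_list (map (\<lambda>A. Abs_fps (\<lambda>u. of_nat (card (A u)) :: rat)) As) $ r"
  using assms
proof (induction As arbitrary: r)
  case Nil
  then show ?case by (simp add: S_Nil fps_one_nth)
next
  case (Cons A As)
  have IH: "finite (S As r') \<and> (of_nat (card (S As r')) :: rat)
      = prod_list (map (\<lambda>A. Abs_fps (\<lambda>u. of_nat (card (A u)) :: rat)) As) $ r'" for r'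
    using Cons by simp
  have fA: "finite (A u)" for u using Cons.prems by simp
  have dA: "u \<noteq> u' \<Longrightarrow> A u \<inter> A u' = {}" for u u' using Cons.prems by simp
  let ?g = "\<lambda>i. (\<lambda>(P, Ps). P # Ps) ` (A i \<times> S As (r - i))"
  have inj: "inj_on (\<lambda>(P, Ps). P # Ps) X" for X :: "('a \<times> 'a list) set"
    by (auto simp: inj_on_def)
  have fin: "\<forall>i\<in>{..r}. finite (?g i)" using fA IH by auto
  have disj: "\<forall>i\<in>{..r}. \<forall>j\<in>{..r}. i \<noteq> j \<longrightarrow> ?g i \<inter> ?g j = {}"
  proof (intro ballI impI)
    fix i j :: nat assume ij: "i \<noteq> j"
    show "?g i \<inter> ?g j = {}"
    proof (rule ccontr)
      assume "?g i \<inter> ?g j \<noteq> {}"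
      then obtain P Ps P' Ps' where "P # Ps = P' # Ps'" "P \<in> A i" "P' \<in> A j" by auto
      then have "P \<in> A i \<inter> A j" by simp
      with dA[OF ij] show False by blast
    qed
  qed
  have "card (S (A # As) r) = (\<Sum>i\<le>r. card (?g i))"
    unfolding S_Cons by (rule card_UN_disjoint[OF _ fin disj]) simp
  also have "\<dots> = (\<Sum>i\<le>r. card (A i) * card (S As (r - i)))"
    by (simp add: card_image[OF inj] card_cartesian_product)
  finally have c: "card (S (A # As) r) = (\<Sum>i\<le>r. card (A i) * card (S As (r - i)))" .
  have "finite (S (A # As) r)" unfolding S_Cons using fin by blast
  moreover have "(of_nat (card (S (A # As) r)) :: rat)
      = prod_list (map (\<lambda>A. Abs_fps (\<lambda>u. of_nat (card (A u)) :: rat)) (A # As)) $ r"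
    unfolding c using IH by (simp add: fps_mult_nth atLeast0AtMost)
  ultimately show ?case by blast
qed

lemma count_general:
  assumes "m \<ge> 1" "\<forall>(a, b) \<in> set ab. a \<le> m - 1 \<and> b \<le> m - 1 \<and> a + b \<le> m - 1"
  shows "prod_list (map (\<lambda>(a, b). ser m a b) ab) $ r
     = of_nat (card {Ps :: bool list list. length Ps = length ab \<and>
                 (\<exists>us :: nat list. length us = length ab
                    \<and> (\<forall>\<nu> < length ab. Ps ! \<nu> \<in> dyck_set m (fst (ab ! \<nu>)) (snd (ab ! \<nu>)) (us ! \<nu>))
                    \<and> sum_list us = r)})"
proof -
  define As where "As = map (\<lambda>(a, b). dyck_set m a b) ab"
  have fin: "\<forall>A\<in>set As. \<forall>u. finite (A u)"
    using assms Dcount_eq(2) unfolding As_def by auto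
  have disj: "\<forall>A\<in>set As. \<forall>u u'. u \<noteq> u' \<longrightarrow> A u \<inter> A u' = {}"
    unfolding As_def by (auto simp: dyck_set_def)
  have "prod_list (map (\<lambda>(a, b). ser m a b) ab)
      = prod_list (map (\<lambda>A. Abs_fps (\<lambda>u. of_nat (card (A u)) :: rat)) As)"
    unfolding As_def by (simp add: ser_def Dcount_def o_def split_def)
  moreover have "S As r = {Ps :: bool list list. length Ps = length ab \<and>
                 (\<exists>us :: nat list. length us = length ab
                    \<and> (\<forall>\<nu> < length ab. Ps ! \<nu> \<in> dyck_set m (fst (ab ! \<nu>)) (snd (ab ! \<nu>)) (us ! \<nu>))
                    \<and> sum_list us = r)}"
    unfolding S_def As_def by (simp add: case_prod_beta)
  ultimately show ?thesis using S_card[OF fin disj, of r] by simp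
qed

lemma prod_ser:
  assumes "m \<ge> 1" "\<forall>(a, b) \<in> set ab. a \<le> m - 1 \<and> b \<le> m - 1 \<and> a + b \<le> m - 1"
  shows "prod_list (map (\<lambda>(a, b). ser m a b) ab)
     = phi (prod_list (map (\<lambda>(a, b). pp a * pp b) ab)) * inverse (Q m) ^ length ab"
  using assms
proof (induction ab)
  case Nil
  then show ?case by (simp add: phi_1)
next
  case (Cons x ab)
  obtain a b where x: "x = (a, b)" by fastforce
  have "ser m a b = Q a * Q b * inverse (Q m)" using Cons.prems x by (intro ser_eq) auto
  then show ?case using Cons x by (simp add: phi_mult Q_def algebra_simps)
qed

lemma pxi_split:
  assumes "\<forall>x\<in>set xs. x \<le> m"
  shows "pxi xs = pp m ^ length (filter (\<lambda>x. x = m) xs) * pxi (filter (\<lambda>x. x < m) xs)"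
  using assms by (induction xs) (auto simp: pxi_def)

lemma Fser_main:
  assumes "m \<ge> 1" "is_partition_le m xi"
    and "length (filter (\<lambda>x. x = m) xi) \<le> mu div m + 1"
    and "\<forall>(a, b) \<in> set ab. a \<le> m - 1 \<and> b \<le> m - 1 \<and> a + b \<le> m - 1"
    and num: "pp (m - mu mod m - 1) * pxi (filter (\<lambda>x. x < m) xi)
          = prod_list (map (\<lambda>(a, b). pp a * pp b) ab)"
    and len: "length ab = mu div m + 1 - length (filter (\<lambda>x. x = m) xi) \<or> m = 1"
  shows "Fser m xi mu = prod_list (map (\<lambda>(a, b). ser m a b) ab)"
proof -
  let ?t = "length (filter (\<lambda>x. x = m) xi)"
  let ?K = "mu div m + 1"
  let ?P = "phi (prod_list (map (\<lambda>(a, b). pp a * pp b) ab))"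
  have le: "\<forall>x\<in>set xi. x \<le> m" using assms(2) by (auto simp: is_partition_le_def)
  have "Fser m xi mu = phi (pp (m - mu mod m - 1) * pxi xi) * inverse (Q m ^ ?K)"
    by (simp add: Fser_def phi_def Q_def)
  also have "phi (pp (m - mu mod m - 1) * pxi xi) = ?P * Q m ^ ?t"
    unfolding pxi_split[OF le] num[symmetric] by (simp add: phi_mult phi_power Q_def algebra_simps)
  finally have F: "Fser m xi mu = ?P * Q m ^ ?t * inverse (Q m ^ ?K)" .
  have iq: "Q m * inverse (Q m) = 1" by (rule inverse_mult_eq_1') (simp add: Q_nth0)
  show ?thesis
  proof (cases "m = 1")
    case True
    then have "Q m = 1" by (simp add: Q1)
    then show ?thesis unfolding F prod_ser[OF assms(1,4)] by simp
  next
    case False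
    then have l: "length ab = ?K - ?t" using len by simp
    have "Q m ^ ?t * inverse (Q m ^ ?K) = inverse (Q m) ^ (?K - ?t)"
    proof -
      have "inverse (Q m ^ ?K) = inverse (Q m) ^ ?t * inverse (Q m) ^ (?K - ?t)"
      proof -
        have "?K = ?t + (?K - ?t)" using assms(3) by simp
        then have "inverse (Q m) ^ ?K = inverse (Q m) ^ ?t * inverse (Q m) ^ (?K - ?t)"
          by (metis power_add)
        then show ?thesis by (simp only: fps_inverse_power)
      qed
      moreover have "Q m ^ ?t * inverse (Q m) ^ ?t = 1"
        by (simp add: power_mult_distrib[symmetric] iq)
      ultimately show ?thesis by (simp add: mult.assoc[symmetric])
    qed
    then show ?thesis unfolding F prod_ser[OF assms(1,4)] l by (simp add: mult.assoc)
  qed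
qed



lemma sorted_rep: "sorted_wrt (\<ge>) (replicate n (x :: nat))"
  by (induction n) auto

lemma mu_divmod:
  assumes "\<rho> < m"
  shows "(a * m + \<rho>) div m = a" "(a * m + \<rho>) mod m = (\<rho> :: nat)"
  using assms by auto

lemma part_c:
  assumes m1: "m \<ge> 1" and rs1: "\<forall>x \<in> set rs. 1 \<le> x \<and> x \<le> m - 1" and srt: "sorted_wrt (\<ge>) rs"
    and sm: "sum_list rs + s = q * m + \<rho>" and rho: "\<rho> < m" and lr: "length rs \<le> q"
  shows "fps_nth (Fser m (replicate t m @ rs @ replicate s 1) (sum_list (replicate t m @ rs @ replicate s 1))) N
       = of_nat (card {Ps :: bool list list. length Ps = q + 1 \<and>
               (\<exists>us :: nat list. length us = q + 1
                  \<and> Ps ! 0 \<in> dyck_set m 0 (m - \<rho> - 1) (us ! 0)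
                  \<and> (\<forall>i \<in> {1..length rs}. Ps ! i \<in> dyck_set m (rs ! (i - 1)) 0 (us ! i))
                  \<and> (\<forall>\<nu> \<in> {length rs + 1..q}. Ps ! \<nu> \<in> dyck_set m 0 0 (us ! \<nu>))
                  \<and> sum_list us = N)})"
proof -
  define xi where "xi = replicate t m @ rs @ replicate s 1"
  define ab where "ab = (0, m - \<rho> - 1) # map (\<lambda>r. (r, 0)) rs @ replicate (q - length rs) (0 :: nat, 0 :: nat)"
  define mu where "mu = sum_list xi"
  have mu: "mu = (t + q) * m + \<rho>" unfolding mu_def xi_def using sm by (simp add: sum_list_replicate algebra_simps)
  have mdiv: "mu div m = t + q" "mu mod m = \<rho>" unfolding mu using rho mu_divmod by auto
  have lab: "length ab = Suc q" unfolding ab_def using lr by simp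
  have part: "is_partition_le m xi"
    unfolding is_partition_le_def xi_def using m1 rs1 srt
    by (auto simp: sorted_wrt_append sorted_rep)
  have valid: "\<forall>(a, b) \<in> set ab. a \<le> m - 1 \<and> b \<le> m - 1 \<and> a + b \<le> m - 1"
    unfolding ab_def using rs1 by auto
  have F: "Fser m xi mu = prod_list (map (\<lambda>(a, b). ser m a b) ab)"
  proof (cases "m = 1")
    case True
    then have "rs = []" using rs1 by (cases rs) auto
    then have "s = q" "\<rho> = 0" using sm rho True by auto
    have fl: "filter (\<lambda>x. x < m) xi = []" using True \<open>rs = []\<close> unfolding xi_def by auto
    have "length (filter (\<lambda>x. x = m) xi) = t + s" using True \<open>rs = []\<close> unfolding xi_def by auto
    then have cnt: "length (filter (\<lambda>x. x = m) xi) \<le> mu div m + 1" using mdiv \<open>s = q\<close> by simp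
    have num: "pp (m - mu mod m - 1) * pxi (filter (\<lambda>x. x < m) xi)
          = prod_list (map (\<lambda>(a, b). pp a * pp b) ab)"
      unfolding fl ab_def using True \<open>rs = []\<close> \<open>\<rho> = 0\<close> by (simp add: pxi_def)
    show ?thesis using Fser_main[OF m1 part cnt valid num] True by simp
  next
    case False
    then have m2: "m \<ge> 2" using m1 by simp
    have fl: "filter (\<lambda>x. x < m) xi = rs @ replicate s 1" using m2 rs1 unfolding xi_def
      by (auto simp: filter_id_conv)
    have fe: "filter (\<lambda>x. x = m) xi = replicate t m" using m2 rs1 unfolding xi_def
      by (auto simp: filter_empty_conv)
    have cnt: "length (filter (\<lambda>x. x = m) xi) \<le> mu div m + 1" using fe mdiv by simp
    have pr: "prod_list (map (\<lambda>(a, b). pp a * pp b) (map (\<lambda>r. (r, 0)) rs)) = pxi rs"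
      by (induction rs) (auto simp: pxi_def)
    have num: "pp (m - mu mod m - 1) * pxi (filter (\<lambda>x. x < m) xi)
          = prod_list (map (\<lambda>(a, b). pp a * pp b) ab)"
      unfolding fl ab_def mdiv using pr by (simp add: pxi_def)
    have len: "length ab = mu div m + 1 - length (filter (\<lambda>x. x = m) xi)"
      using lab fe mdiv by simp
    show ?thesis using Fser_main[OF m1 part cnt valid num] len by simp
  qed
  have ab_nth: "ab ! \<nu> = (if \<nu> = 0 then (0, m - \<rho> - 1) else if \<nu> \<le> length rs then (rs ! (\<nu> - 1), 0) else (0, 0))"
    if "\<nu> < Suc q" for \<nu>
  proof (cases \<nu>)
    case 0 then show ?thesis by (simp add: ab_def)
  next
    case (Suc k)
    then show ?thesis using that lr by (auto simp: ab_def nth_append)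
  qed
  have eqv: "(\<forall>\<nu> < length ab. Ps ! \<nu> \<in> dyck_set m (fst (ab ! \<nu>)) (snd (ab ! \<nu>)) (us ! \<nu>))
     \<longleftrightarrow> Ps ! 0 \<in> dyck_set m 0 (m - \<rho> - 1) (us ! 0)
                  \<and> (\<forall>i \<in> {1..length rs}. Ps ! i \<in> dyck_set m (rs ! (i - 1)) 0 (us ! i))
                  \<and> (\<forall>\<nu> \<in> {length rs + 1..q}. Ps ! \<nu> \<in> dyck_set m 0 0 (us ! \<nu>))" for Ps us
  proof
    assume h: "\<forall>\<nu> < length ab. Ps ! \<nu> \<in> dyck_set m (fst (ab ! \<nu>)) (snd (ab ! \<nu>)) (us ! \<nu>)"
    have "Ps ! 0 \<in> dyck_set m 0 (m - \<rho> - 1) (us ! 0)" using h[rule_format, of 0] lab ab_nth[of 0] by simp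
    moreover have "\<forall>i \<in> {1..length rs}. Ps ! i \<in> dyck_set m (rs ! (i - 1)) 0 (us ! i)"
    proof
      fix i assume i: "i \<in> {1..length rs}"
      then have "i < Suc q" using lr by auto
      then show "Ps ! i \<in> dyck_set m (rs ! (i - 1)) 0 (us ! i)" using h[rule_format, of i] lab ab_nth[of i] i by simp
    qed
    moreover have "\<forall>\<nu> \<in> {length rs + 1..q}. Ps ! \<nu> \<in> dyck_set m 0 0 (us ! \<nu>)"
    proof
      fix i assume i: "i \<in> {length rs + 1..q}"
      then have "i < Suc q" by auto
      then show "Ps ! i \<in> dyck_set m 0 0 (us ! i)" using h[rule_format, of i] lab ab_nth[of i] i by simp
    qed
    ultimately show "Ps ! 0 \<in> dyck_set m 0 (m - \<rho> - 1) (us ! 0)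
                  \<and> (\<forall>i \<in> {1..length rs}. Ps ! i \<in> dyck_set m (rs ! (i - 1)) 0 (us ! i))
                  \<and> (\<forall>\<nu> \<in> {length rs + 1..q}. Ps ! \<nu> \<in> dyck_set m 0 0 (us ! \<nu>))" by blast
  next
    assume h: "Ps ! 0 \<in> dyck_set m 0 (m - \<rho> - 1) (us ! 0)
                  \<and> (\<forall>i \<in> {1..length rs}. Ps ! i \<in> dyck_set m (rs ! (i - 1)) 0 (us ! i))
                  \<and> (\<forall>\<nu> \<in> {length rs + 1..q}. Ps ! \<nu> \<in> dyck_set m 0 0 (us ! \<nu>))"
    show "\<forall>\<nu> < length ab. Ps ! \<nu> \<in> dyck_set m (fst (ab ! \<nu>)) (snd (ab ! \<nu>)) (us ! \<nu>)"
    proof (intro allI impI)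
      fix \<nu> assume "\<nu> < length ab"
      then have n: "\<nu> < Suc q" using lab by simp
      show "Ps ! \<nu> \<in> dyck_set m (fst (ab ! \<nu>)) (snd (ab ! \<nu>)) (us ! \<nu>)"
      proof (cases "\<nu> = 0")
        case True then show ?thesis using h ab_nth[OF n] by simp
      next
        case False
        show ?thesis
        proof (cases "\<nu> \<le> length rs")
          case True
          then have "\<nu> \<in> {1..length rs}" using False by simp
          then show ?thesis using h ab_nth[OF n] False True by simp
        next
          case nle: False
          then have "\<nu> \<in> {length rs + 1..q}" using n by simp
          then show ?thesis using h ab_nth[OF n] False nle by simp
        qed
      qed
    qed
  qed
  have "Fser m xi mu $ N = of_nat (card {Ps :: bool list list. length Ps = length ab \<and>
                 (\<exists>us :: nat list. length us = length ab
                    \<and> (\<forall>\<nu> < length ab. Ps ! \<nu> \<in> dyck_set m (fst (ab ! \<nu>)) (snd (ab ! \<nu>)) (us ! \<nu>))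
                    \<and> sum_list us = N)})"
    unfolding F by (rule count_general[OF m1 valid])
  also have "{Ps :: bool list list. length Ps = length ab \<and>
                 (\<exists>us :: nat list. length us = length ab
                    \<and> (\<forall>\<nu> < length ab. Ps ! \<nu> \<in> dyck_set m (fst (ab ! \<nu>)) (snd (ab ! \<nu>)) (us ! \<nu>))
                    \<and> sum_list us = N)}
     = {Ps :: bool list list. length Ps = q + 1 \<and>
               (\<exists>us :: nat list. length us = q + 1
                  \<and> Ps ! 0 \<in> dyck_set m 0 (m - \<rho> - 1) (us ! 0)
                  \<and> (\<forall>i \<in> {1..length rs}. Ps ! i \<in> dyck_set m (rs ! (i - 1)) 0 (us ! i))
                  \<and> (\<forall>\<nu> \<in> {length rs + 1..q}. Ps ! \<nu> \<in> dyck_set m 0 0 (us ! \<nu>))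
                  \<and> sum_list us = N)}"
    using eqv lab by simp
  finally show ?thesis unfolding mu_def xi_def .
qed

lemma part_b0:
  assumes m1: "m \<ge> 1" and r: "1 \<le> r" "r \<le> m - 1" and rs: "r + s = \<rho>" and rho: "\<rho> < m"
  shows "fps_nth (Fser m (replicate t m @ [r] @ replicate s 1) (sum_list (replicate t m @ [r] @ replicate s 1))) u
     = of_nat (Dcount m r (m - r - s - 1) u)"
proof -
  define xi where "xi = replicate t m @ [r] @ replicate s 1"
  define ab where "ab = [(r, m - r - s - 1)]"
  define mu where "mu = sum_list xi"
  have m2: "m \<ge> 2" using r by simp
  have mu: "mu = t * m + \<rho>" unfolding mu_def xi_def using rs by (simp add: sum_list_replicate algebra_simps)
  have mdiv: "mu div m = t" "mu mod m = \<rho>" unfolding mu using rho mu_divmod by auto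
  have part: "is_partition_le m xi"
    unfolding is_partition_le_def xi_def using m1 r
    by (auto simp: sorted_wrt_append sorted_rep)
  have valid: "\<forall>(a, b) \<in> set ab. a \<le> m - 1 \<and> b \<le> m - 1 \<and> a + b \<le> m - 1"
    unfolding ab_def using r rs rho by auto
  have fl: "filter (\<lambda>x. x < m) xi = [r] @ replicate s 1" using m2 r unfolding xi_def
    by (auto simp: filter_id_conv)
  have fe: "filter (\<lambda>x. x = m) xi = replicate t m" using m2 r unfolding xi_def
    by (auto simp: filter_empty_conv)
  have cnt: "length (filter (\<lambda>x. x = m) xi) \<le> mu div m + 1" using fe mdiv by simp
  have num: "pp (m - mu mod m - 1) * pxi (filter (\<lambda>x. x < m) xi)
        = prod_list (map (\<lambda>(a, b). pp a * pp b) ab)"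
    unfolding fl ab_def mdiv using rs by (simp add: pxi_def)
  have len: "length ab = mu div m + 1 - length (filter (\<lambda>x. x = m) xi)"
    using fe mdiv by (simp add: ab_def)
  have "Fser m xi mu = prod_list (map (\<lambda>(a, b). ser m a b) ab)"
    by (rule Fser_main[OF m1 part cnt valid num disjI1[OF len]])
  also have "\<dots> = ser m r (m - r - s - 1)" by (simp add: ab_def)
  finally have "Fser m xi mu = ser m r (m - r - s - 1)" .
  then show ?thesis unfolding mu_def xi_def by (simp add: ser_def)
qed



theorem theorem1p3:
  fixes m :: nat
  assumes "m \<ge> 1"
  shows
  "(\<forall>(xi :: nat list) (mu :: nat) (ab :: (nat \<times> nat) list).
      is_partition_le m xi
      \<and> length (filter (\<lambda>x. x = m) xi) \<le> mu div m + 1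
      \<and> length ab = mu div m + 1 - length (filter (\<lambda>x. x = m) xi)
      \<and> (\<forall>(a, b) \<in> set ab. a \<le> m - 1 \<and> b \<le> m - 1 \<and> a + b \<le> m - 1)
      \<and> pp (m - mu mod m - 1) * pxi (filter (\<lambda>x. x < m) xi)
          = prod_list (map (\<lambda>(a, b). pp a * pp b) ab)
    \<longrightarrow> Fser m xi mu
          = prod_list (map (\<lambda>(a, b). Abs_fps (\<lambda>u. of_nat (Dcount m a b u))) ab)
      \<and> (\<forall>r. fps_nth (Fser m xi mu) r
             = of_nat (card {Ps :: bool list list. length Ps = length ab \<and>
                 (\<exists>us :: nat list. length us = length ab
                    \<and> (\<forall>\<nu> < length ab. Ps ! \<nu> \<in> dyck_set m (fst (ab ! \<nu>)) (snd (ab ! \<nu>)) (us ! \<nu>))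
                    \<and> sum_list us = r)}))
      \<and> (\<forall>r. fps_nth (Fser m xi mu) r \<ge> 0))
   \<and>
   (\<forall>t s q \<rho> :: nat. s = q * m + \<rho> \<and> \<rho> < m \<longrightarrow>
      (let xi = replicate t m @ replicate s 1 in
       \<forall>N. fps_nth (Fser m xi (sum_list xi)) N
           = of_nat (card {Ps :: bool list list. length Ps = q + 1 \<and>
               (\<exists>us :: nat list. length us = q + 1
                  \<and> Ps ! 0 \<in> dyck_set m 0 (m - \<rho> - 1) (us ! 0)
                  \<and> (\<forall>\<nu> \<in> {1..q}. Ps ! \<nu> \<in> dyck_set m 0 0 (us ! \<nu>))
                  \<and> sum_list us = N)})))
   \<and>
   (\<forall>t r s q \<rho> :: nat. 1 \<le> r \<and> r \<le> m - 1 \<and> r + s = q * m + \<rho> \<and> \<rho> < m \<longrightarrow>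
      (let xi = replicate t m @ [r] @ replicate s 1 in
       (q = 0 \<longrightarrow> (\<forall>u. fps_nth (Fser m xi (sum_list xi)) u = of_nat (Dcount m r (m - r - s - 1) u)))
       \<and>
       (q \<ge> 1 \<longrightarrow> (\<forall>N. fps_nth (Fser m xi (sum_list xi)) N
           = of_nat (card {Ps :: bool list list. length Ps = q + 1 \<and>
               (\<exists>us :: nat list. length us = q + 1
                  \<and> Ps ! 0 \<in> dyck_set m 0 (m - \<rho> - 1) (us ! 0)
                  \<and> Ps ! 1 \<in> dyck_set m r 0 (us ! 1)
                  \<and> (\<forall>\<nu> \<in> {2..q}. Ps ! \<nu> \<in> dyck_set m 0 0 (us ! \<nu>))
                  \<and> sum_list us = N)})))))
   \<and>
   (\<forall>(t :: nat) (rs :: nat list) (s :: nat) (q :: nat) (\<rho> :: nat).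
      (\<forall>x \<in> set rs. 1 \<le> x \<and> x \<le> m - 1) \<and> sorted_wrt (\<ge>) rs
      \<and> sum_list rs + s = q * m + \<rho> \<and> \<rho> < m \<and> length rs \<le> q \<longrightarrow>
      (let xi = replicate t m @ rs @ replicate s 1 in
       \<forall>N. fps_nth (Fser m xi (sum_list xi)) N
           = of_nat (card {Ps :: bool list list. length Ps = q + 1 \<and>
               (\<exists>us :: nat list. length us = q + 1
                  \<and> Ps ! 0 \<in> dyck_set m 0 (m - \<rho> - 1) (us ! 0)
                  \<and> (\<forall>i \<in> {1..length rs}. Ps ! i \<in> dyck_set m (rs ! (i - 1)) 0 (us ! i))
                  \<and> (\<forall>\<nu> \<in> {length rs + 1..q}. Ps ! \<nu> \<in> dyck_set m 0 0 (us ! \<nu>))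
                  \<and> sum_list us = N)})))"
  apply (intro conjI)
  subgoal
    apply (intro allI impI)
    subgoal premises h for xi mu ab
    proof -
      have h1: "is_partition_le m xi" "length (filter (\<lambda>x. x = m) xi) \<le> mu div m + 1"
        "length ab = mu div m + 1 - length (filter (\<lambda>x. x = m) xi)"
        "\<forall>(a, b) \<in> set ab. a \<le> m - 1 \<and> b \<le> m - 1 \<and> a + b \<le> m - 1"
        "pp (m - mu mod m - 1) * pxi (filter (\<lambda>x. x < m) xi) = prod_list (map (\<lambda>(a, b). pp a * pp b) ab)"
        using h by auto
      have F: "Fser m xi mu = prod_list (map (\<lambda>(a, b). ser m a b) ab)"
        using Fser_main[OF assms h1(1,2,4,5)] h1(3) by simp
      have C: "\<forall>r. fps_nth (Fser m xi mu) r
             = of_nat (card {Ps :: bool list list. length Ps = length ab \<and>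
                 (\<exists>us :: nat list. length us = length ab
                    \<and> (\<forall>\<nu> < length ab. Ps ! \<nu> \<in> dyck_set m (fst (ab ! \<nu>)) (snd (ab ! \<nu>)) (us ! \<nu>))
                    \<and> sum_list us = r)})"
        unfolding F using count_general[OF assms h1(4)] by blast
      show ?thesis
        using F C unfolding ser_def by simp
    qed
    done
  subgoal
    apply (intro allI impI)
    subgoal premises h for t s q \<rho>
    proof -
      have a: "\<forall>x \<in> set ([]::nat list). 1 \<le> x \<and> x \<le> m - 1" "sorted_wrt (\<ge>) ([]::nat list)"
        "sum_list ([]::nat list) + s = q * m + \<rho>" "\<rho> < m" "length ([]::nat list) \<le> q" using h by auto
      show ?thesis using part_c[OF assms a] by (simp add: Let_def)
    qed
    done
  subgoal
    apply (intro allI impI)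
    subgoal premises h for t r s q \<rho>
      unfolding Let_def
    proof (intro conjI impI allI)
      fix u assume "q = 0"
      then show "fps_nth (Fser m (replicate t m @ [r] @ replicate s 1) (sum_list (replicate t m @ [r] @ replicate s 1))) u
         = of_nat (Dcount m r (m - r - s - 1) u)"
        using h by (intro part_b0[OF assms, of r s \<rho>]) auto
    next
      fix N assume "1 \<le> q"
      have a: "\<forall>x \<in> set [r]. 1 \<le> x \<and> x \<le> m - 1" "sorted_wrt (\<ge>) [r]"
        "sum_list [r] + s = q * m + \<rho>" "\<rho> < m" "length [r] \<le> q" using h \<open>1 \<le> q\<close> by auto
      show "fps_nth (Fser m (replicate t m @ [r] @ replicate s 1) (sum_list (replicate t m @ [r] @ replicate s 1))) N
           = of_nat (card {Ps :: bool list list. length Ps = q + 1 \<and>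
               (\<exists>us :: nat list. length us = q + 1
                  \<and> Ps ! 0 \<in> dyck_set m 0 (m - \<rho> - 1) (us ! 0)
                  \<and> Ps ! 1 \<in> dyck_set m r 0 (us ! 1)
                  \<and> (\<forall>\<nu> \<in> {2..q}. Ps ! \<nu> \<in> dyck_set m 0 0 (us ! \<nu>))
                  \<and> sum_list us = N)})"
        using part_c[OF assms a, of t N] by (simp add: numeral_2_eq_2)
    qed
    done
  subgoal
    apply (intro allI impI)
    subgoal premises h for t rs s q \<rho>
    proof -
      have a: "\<forall>x \<in> set rs. 1 \<le> x \<and> x \<le> m - 1" "sorted_wrt (\<ge>) rs"
        "sum_list rs + s = q * m + \<rho>" "\<rho> < m" "length rs \<le> q" using h by auto
      show ?thesis using part_c[OF assms a] by (simp add: Let_def)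
    qed
    done
  done


end
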